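(* Let $n\ge1$, $k\ge2$, $\mathcal{K}=\{\kappa_0,\dots,\kappa_{k-1}\}$ a set of size $k$, $\epsilon\ge0$ and $p=e^\epsilon/(k-1+e^\epsilon)$. For the uniform prior $\pi$ on $\mathcal{K}^n$ and the single-target gain function $g_{\rm T}$, $$V_{\rm T}[\pi\triangleright\mathbf{N}\mathbf{S}]=\frac{1}{k^n}\sum_{\substack{n_0,\dots,n_{k-1}\ge0\\ n_0+\dots+n_{k-1}=n}}\binom{n}{n_0,\dots,n_{k-1}}\frac{p\,n^*+\frac{1-p}{k-1}(n-n^* )}{n},$$ where $n^*=\max(n_0,\dots,n_{k-1})$.
   Context: A dataset is $x=(x_0,\dots,x_{n-1})\in\mathcal{K}^n$; its histogram $h(x)$ is the map $\kappa\mapsto|\{i:x_i=\kappa\}|$; $\#z$ is the number of datasets with histogram $z$. Full $k$-RR channel $\mathbf{N}:\mathcal{K}^n\to\mathcal{K}^n$: $\mathbf{N}_{x,y}=\prod_{i=0}^{n-1}q(y_i\mid x_i)$, $q(b\mid a)=p$ if $b=a$, $(1-p)/(k-1)$ otherwise. Shuffle channel $\mathbf{S}:\mathcal{K}^n\to\mathcal{K}^n$: $\mathbf{S}_{x,y}=1/\#h(x)$ if $h(y)=h(x)$, else $0$; $\mathbf{N}\mathbf{S}$ is the matrix product. Uniform prior $\pi_x=1/k^n$. Single-target gain function: $\mathcal{W}=\mathcal{K}$, $g_{\rm T}(w,x)=1$ if $x_0=w$, else $0$. Posterior vulnerability: $V_{\rm T}[\pi\triangleright\mathbf{C}]=\sum_{y}\max_{w}\sum_{x}\pi_x\mathbf{C}_{x,y}g_{\rm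 T}(w,x)$. The multinomial coefficient is $\binom{n}{n_0,\dots,n_{k-1}}=n!/(n_0!\cdots n_{k-1}!)$. *)

theory Defs
  imports Complex_Main "HOL-Library.FuncSet"
begin

definition datasets :: "'a set \<Rightarrow> nat \<Rightarrow> 'a list set" where
  "datasets K n = {x. length x = n \<and> set x \<subseteq> K}"

definition hist :: "'a list \<Rightarrow> 'a \<Rightarrow> nat" where
  "hist x = (\<lambda>\<kappa>. card {i. i < length x \<and> x ! i = \<kappa>})"

definition num_hist :: "'a set \<Rightarrow> nat \<Rightarrow> ('a \<Rightarrow> nat) \<Rightarrow> nat" where
  "num_hist K n z = card {y \<in> datasets K n. hist y = z}"

text \<open>k-RR single-symbol channel q(b | a).\<close>
definition krr :: "nat \<Rightarrow> real \<Rightarrow> 'a \<Rightarrow> 'a \<Rightarrow> real" where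
  "krr k p b a = (if b = a then p else (1 - p) / (real k - 1))"

definition chanN :: "nat \<Rightarrow> real \<Rightarrow> nat \<Rightarrow> 'a list \<Rightarrow> 'a list \<Rightarrow> real" where
  "chanN k p n x y = (\<Prod>i<n. krr k p (y ! i) (x ! i))"

definition chanS :: "'a set \<Rightarrow> nat \<Rightarrow> 'a list \<Rightarrow> 'a list \<Rightarrow> real" where
  "chanS K n x y = (if hist y = hist x then 1 / real (num_hist K n (hist x)) else 0)"

definition chanNS :: "'a set \<Rightarrow> nat \<Rightarrow> real \<Rightarrow> nat \<Rightarrow> 'a list \<Rightarrow> 'a list \<Rightarrow> real" where
  "chanNS K k p n x y = (\<Sum>z\<in>datasets K n. chanN k p n x z * chanS K n z y)"

definition gainT :: "'a \<Rightarrow> 'a list \<Rightarrow> real" where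
  "gainT w x = (if x ! 0 = w then 1 else 0)"

definition postV_T :: "'a set \<Rightarrow> nat \<Rightarrow> ('a list \<Rightarrow> real) \<Rightarrow> ('a list \<Rightarrow> 'a list \<Rightarrow> real) \<Rightarrow> real" where
  "postV_T K n \<pi> C = (\<Sum>y\<in>datasets K n. Max ((\<lambda>w. \<Sum>x\<in>datasets K n. \<pi> x * C x y * gainT w x) ` K))"

definition unif_prior :: "nat \<Rightarrow> nat \<Rightarrow> 'a list \<Rightarrow> real" where
  "unif_prior k n x = 1 / real k ^ n"

definition compositions :: "nat \<Rightarrow> nat \<Rightarrow> (nat \<Rightarrow> nat) set" where
  "compositions k n = {c \<in> {..<k} \<rightarrow>\<^sub>E {..n}. (\<Sum>i<k. c i) = n}"

definition multinomial :: "nat \<Rightarrow> nat \<Rightarrow> (nat \<Rightarrow> nat) \<Rightarrow> real" where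
  "multinomial k n c = fact n / (\<Prod>i<k. fact (c i))"

end

theory Submission
  imports Defs "HOL-Combinatorics.Multiset_Permutations"
begin

lemma hist_mset: "hist x = count (mset x)"
proof
  fix k
  have "count (mset x) k = length (filter ((=) k) x)"
    by (metis length_replicate replicate_count_mset_eq_filter_eq)
  also have "\<dots> = card {i. i < length x \<and> k = x ! i}" by (rule length_filter_conv_card)
  also have "{i. i < length x \<and> k = x ! i} = {i. i < length x \<and> x ! i = k}" by auto
  finally show "hist x k = count (mset x) k" unfolding hist_def by argo
qed

lemma finite_datasets: "finite K \<Longrightarrow> finite (datasets K n)"
  unfolding datasets_def using finite_lists_length_eq[of K n] by (simp add: conj_commute)

lemma datasets_Suc: "datasets K (Suc n) = (\<lambda>(a,x). a # x) ` (K \<times> datasets K n)"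
  unfolding datasets_def
  by (auto simp: length_Suc_conv image_iff)

lemma inj_Cons_pair: "inj_on (\<lambda>(a,x). a # x) A"
  by (auto simp: inj_on_def)

lemma krr_col:
  assumes "finite K" "card K = k" "k \<ge> 2" "b \<in> K"
  shows "(\<Sum>a\<in>K. krr k p b a) = 1"
proof -
  have "(\<Sum>a\<in>K. krr k p b a) = krr k p b b + (\<Sum>a\<in>K - {b}. krr k p b a)"
    using assms by (simp add: sum.remove)
  also have "(\<Sum>a\<in>K - {b}. krr k p b a) = (\<Sum>a\<in>K - {b}. (1 - p) / (real k - 1))"
    by (rule sum.cong) (auto simp: krr_def)
  also have "\<dots> = real (k - 1) * ((1 - p) / (real k - 1))" using assms by simp
  also have "\<dots> = 1 - p" using assms by (simp add: of_nat_diff)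
  finally show ?thesis by (simp add: krr_def)
qed

lemma sum_chanN_aux:
  assumes "finite K" "card K = k" "k \<ge> 2"
  shows "length z = n \<Longrightarrow> set z \<subseteq> K \<Longrightarrow> (\<Sum>x\<in>datasets K n. chanN k p n x z) = 1"
proof (induction n arbitrary: z)
  case 0
  have "datasets K 0 = {[]}" by (auto simp: datasets_def)
  then show ?case by (simp add: chanN_def)
next
  case (Suc n)
  then obtain b z' where z: "z = b # z'" by (cases z) auto
  have b: "b \<in> K" and z': "length z' = n" "set z' \<subseteq> K" using Suc.prems z by auto
  have "(\<Sum>x\<in>datasets K (Suc n). chanN k p (Suc n) x z)
     = (\<Sum>(a,x)\<in>K \<times> datasets K n. chanN k p (Suc n) (a # x) z)"
    unfolding datasets_Suc by (subst sum.reindex[OF inj_Cons_pair]) (simp add: case_prod_unfold)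
  also have "\<dots> = (\<Sum>a\<in>K. \<Sum>x\<in>datasets K n. krr k p b a * chanN k p n x z')"
    unfolding sum.cartesian_product[symmetric]
    by (simp add: chanN_def z prod.lessThan_Suc_shift del: prod.lessThan_Suc)
  also have "\<dots> = (\<Sum>a\<in>K. krr k p b a)"
    by (rule sum.cong[OF refl]) (simp only: sum_distrib_left[symmetric] Suc.IH[OF z'] mult_1_right)
  also have "\<dots> = 1" by (rule krr_col[OF assms b])
  finally show ?case .
qed

lemma sum_gain_chanN:
  assumes "finite K" "card K = k" "k \<ge> 2" "n \<ge> 1" "z \<in> datasets K n" "w \<in> K"
  shows "(\<Sum>x\<in>datasets K n. gainT w x * chanN k p n x z) = krr k p (z ! 0) w"
proof -
  obtain m where n: "n = Suc m" using assms by (cases n) auto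
  obtain b z' where z: "z = b # z'" using assms n by (cases z) (auto simp: datasets_def)
  have z': "length z' = m" "set z' \<subseteq> K" using assms z n by (auto simp: datasets_def)
  have "(\<Sum>x\<in>datasets K n. gainT w x * chanN k p n x z)
     = (\<Sum>(a,x)\<in>K \<times> datasets K m. gainT w (a # x) * chanN k p (Suc m) (a # x) z)"
    unfolding n datasets_Suc by (subst sum.reindex[OF inj_Cons_pair]) (simp add: case_prod_unfold)
  also have "\<dots> = (\<Sum>a\<in>K. \<Sum>x\<in>datasets K m. (if a = w then krr k p b a else 0) * chanN k p m x z')"
    unfolding sum.cartesian_product[symmetric]
    by (rule sum.cong[OF refl], rule sum.cong[OF refl])
       (auto simp: chanN_def z prod.lessThan_Suc_shift gainT_def simp del: prod.lessThan_Suc)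
  also have "\<dots> = (\<Sum>a\<in>K. (if a = w then krr k p b a else 0))"
    by (rule sum.cong[OF refl]) (simp only: sum_distrib_left[symmetric] sum_chanN_aux[OF assms(1-3) z'] mult_1_right)
  also have "\<dots> = krr k p b w" using assms by simp
  finally show ?thesis by (simp add: z)
qed


definition swp :: "nat \<Rightarrow> 'a list \<Rightarrow> 'a list" where
  "swp i z = z[0 := z ! i, i := z ! 0]"

lemma swp_props:
  assumes "i < length z"
  shows "length (swp i z) = length z" "mset (swp i z) = mset z" "swp i (swp i z) = z"
    "swp i z ! 0 = z ! i" "swp i z ! i = z ! 0"
proof -
  have l0: "0 < length z" using assms by linarith
  show "length (swp i z) = length z" by (simp add: swp_def)
  show "mset (swp i z) = mset z" unfolding swp_def using mset_swap[OF assms l0] by simp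
  show "swp i (swp i z) = z" unfolding swp_def using assms
    using l0 by (cases "i = 0") (simp, intro nth_equalityI, auto simp: nth_list_update split: if_splits)
  show "swp i z ! 0 = z ! i" unfolding swp_def using assms l0
    by (cases "i = 0") (auto simp: nth_list_update)
  show "swp i z ! i = z ! 0" unfolding swp_def using assms
    by (auto simp: nth_list_update)
qed

lemma datasets_mset: "y \<in> datasets K n \<Longrightarrow> mset z = mset y \<Longrightarrow> z \<in> datasets K n"
  unfolding datasets_def by (auto dest: mset_eq_setD mset_eq_length)

lemma class_pos_count:
  assumes "finite K" "i < n" "C = {z \<in> datasets K n. hist z = h}"
  shows "card {z \<in> C. z ! i = w} = card {z \<in> C. z ! 0 = w}"
proof -
  have "bij_betw (swp i) {z \<in> C. z ! i = w} {z \<in> C. z ! 0 = w}"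
  proof (rule bij_betw_byWitness[where f' = "swp i"])
    have L: "z \<in> C \<Longrightarrow> i < length z" for z using assms by (auto simp: datasets_def)
    have M: "z \<in> C \<Longrightarrow> swp i z \<in> C" for z
      using assms L[of z] swp_props(2)[of i z] datasets_mset[of z K n "swp i z"]
      by (auto simp: hist_mset)
    show "\<forall>a\<in>{z \<in> C. z ! i = w}. swp i (swp i a) = a" using L swp_props(3) by blast
    show "\<forall>a\<in>{z \<in> C. z ! 0 = w}. swp i (swp i a) = a" using L swp_props(3) by blast
    show "swp i ` {z \<in> C. z ! i = w} \<subseteq> {z \<in> C. z ! 0 = w}" using L M swp_props(4) by auto
    show "swp i ` {z \<in> C. z ! 0 = w} \<subseteq> {z \<in> C. z ! i = w}" using L M swp_props(5) by auto
  qed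
  then show ?thesis by (simp add: bij_betw_same_card)
qed

lemma class_count:
  assumes "finite K" "n \<ge> 1" "C = {z \<in> datasets K n. hist z = h}"
  shows "n * card {z \<in> C. z ! 0 = w} = card C * h w"
proof -
  have fC: "finite C" using assms finite_datasets[of K n] by simp
  have "(\<Sum>i<n. card {z \<in> C. z ! i = w}) = (\<Sum>i<n. card {z \<in> C. z ! 0 = w})"
    by (rule sum.cong[OF refl]) (rule class_pos_count[OF assms(1) _ assms(3)], simp)
  then have "n * card {z \<in> C. z ! 0 = w} = (\<Sum>i<n. card {z \<in> C. z ! i = w})"
    by simp
  also have "\<dots> = (\<Sum>i<n. \<Sum>z\<in>C. if z ! i = w then 1 else 0)"
    using fC by (simp add: sum.If_cases Int_def)
  also have "\<dots> = (\<Sum>z\<in>C. \<Sum>i<n. if z ! i = w then 1 else 0)" by (rule sum.swap)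
  also have "\<dots> = (\<Sum>z\<in>C. h w)"
  proof (rule sum.cong[OF refl])
    fix z assume z: "z \<in> C"
    then have "length z = n" "hist z = h" using assms by (auto simp: datasets_def)
    then have "h w = card {i. i < n \<and> z ! i = w}" by (auto simp: hist_def)
    also have "\<dots> = card {i \<in> {..<n}. z ! i = w}" by (rule arg_cong[where f=card]) auto
    also have "\<dots> = (\<Sum>i<n. if z ! i = w then 1 else 0)" by (simp add: sum.If_cases Int_def)
    finally show "(\<Sum>i<n. if z ! i = w then 1 else 0) = h w" by simp
  qed
  also have "\<dots> = card C * h w" by simp
  finally show ?thesis .
qed


lemma inner_val:
  assumes K: "finite K" "card K = k" "k \<ge> 2" and n: "n \<ge> 1"
    and y: "y \<in> datasets K n" and w: "w \<in> K"
  shows "(\<Sum>x\<in>datasets K n. unif_prior k n x * chanNS K k p n x y * gainT w x)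
    = 1 / real k ^ n * ((p * real (hist y w) + (1 - p) / (real k - 1) * (real n - real (hist y w))) / real n)"
proof -
  define D where "D = datasets K n"
  define C where "C = {z \<in> D. hist z = hist y}"
  define c where "c = (1 - p) / (real k - 1)"
  define N where "N = card C"
  define A where "A = card {z \<in> C. z ! 0 = w}"
  have fD: "finite D" using K finite_datasets D_def by blast
  have fC: "finite C" using fD C_def by simp
  have yC: "y \<in> C" using y C_def D_def by simp
  have Npos: "N > 0" using fC yC N_def card_gt_0_iff by blast
  have NA: "real n * real A = real N * real (hist y w)"
    using class_count[OF K(1) n, of C "hist y" w] C_def D_def A_def N_def
    by (metis of_nat_mult)
  have numh: "num_hist K n (hist y) = N" by (simp add: num_hist_def N_def C_def D_def)
  have "(\<Sum>x\<in>D. unif_prior k n x * chanNS K k p n x y * gainT w x)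
      = 1 / real k ^ n * (\<Sum>x\<in>D. \<Sum>z\<in>D. gainT w x * chanN k p n x z * chanS K n z y)"
    by (simp add: unif_prior_def chanNS_def D_def sum_distrib_left sum_distrib_right mult_ac)
  also have "(\<Sum>x\<in>D. \<Sum>z\<in>D. gainT w x * chanN k p n x z * chanS K n z y)
      = (\<Sum>z\<in>D. chanS K n z y * (\<Sum>x\<in>D. gainT w x * chanN k p n x z))"
    by (subst sum.swap) (simp add: sum_distrib_left mult_ac)
  also have "\<dots> = (\<Sum>z\<in>D. chanS K n z y * krr k p (z ! 0) w)"
    using sum_gain_chanN[OF K n _ w] D_def by simp
  also have "\<dots> = (\<Sum>z\<in>D. if hist z = hist y then krr k p (z ! 0) w / real N else 0)"
    by (rule sum.cong[OF refl]) (auto simp: chanS_def numh)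
  also have "\<dots> = (\<Sum>z\<in>C. krr k p (z ! 0) w / real N)"
    unfolding C_def using fD by (simp add: sum.inter_filter)
  also have "\<dots> = (\<Sum>z\<in>C. (c + (p - c) * (if z ! 0 = w then 1 else 0)) / real N)"
    by (rule sum.cong[OF refl]) (simp add: krr_def c_def)
  also have "\<dots> = (\<Sum>z\<in>C. c + (p - c) * (if z ! 0 = w then 1 else 0)) / real N"
    by (simp add: sum_divide_distrib)
  also have "(\<Sum>z\<in>C. c + (p - c) * (if z ! 0 = w then 1 else 0)) = real N * c + (p - c) * real A"
    using fC by (simp add: sum.distrib sum_distrib_left[symmetric] sum.If_cases N_def A_def Int_def)
  also have "(real N * c + (p - c) * real A) / real N
      = (p * real (hist y w) + c * (real n - real (hist y w))) / real n"
  proof -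
    have "real n > 0" using n by simp
    have "real A = real N * real (hist y w) / real n" using NA n by (simp add: field_simps)
    then show ?thesis using Npos n by (simp add: field_simps)
  qed
  finally show ?thesis by (simp add: D_def c_def)
qed


lemma regroup:
  assumes K: "finite K" "card K = k"
  shows "(\<Sum>y\<in>datasets K n. F (Max (hist y ` K)))
       = (\<Sum>c\<in>compositions k n. multinomial k n c * F (Max (c ` {..<k})))"
proof -
  obtain \<phi> where phi: "bij_betw \<phi> {..<k} K"
    using ex_bij_betw_nat_finite[OF K(1)] K(2) by (auto simp: atLeast0LessThan)
  have phiK: "i < k \<Longrightarrow> \<phi> i \<in> K" for i using phi by (auto simp: bij_betw_def)
  have phiinj: "i < k \<Longrightarrow> j < k \<Longrightarrow> \<phi> i = \<phi> j \<longleftrightarrow> i = j" for i j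
    using phi by (auto simp: bij_betw_def inj_on_def)
  have phiim: "\<phi> ` {..<k} = K" using phi by (simp add: bij_betw_def)
  define D where "D = datasets K n"
  define g where "g y = restrict (\<lambda>i. hist y (\<phi> i)) {..<k}" for y
  define M where "M c = (\<Sum>i<k. replicate_mset (c i) (\<phi> i))" for c :: "nat \<Rightarrow> nat"
  have fD: "finite D" using K finite_datasets D_def by blast
  have fComp: "finite (compositions k n)"
  proof -
    have "finite ({..<k} \<rightarrow>\<^sub>E {..n})" by (intro finite_PiE) auto
    then show ?thesis unfolding compositions_def by (rule rev_finite_subset) auto
  qed
  have sumhist: "(\<Sum>i<k. hist y (\<phi> i)) = n" if "y \<in> D" for y
  proof -
    have sm: "set_mset (mset y) \<subseteq> K" using that by (auto simp: D_def datasets_def)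
    have "(\<Sum>i<k. hist y (\<phi> i)) = (\<Sum>x\<in>K. count (mset y) x)"
      using sum.reindex_bij_betw[OF phi, of "count (mset y)"] by (simp add: hist_mset)
    also have "\<dots> = (\<Sum>x\<in>set_mset (mset y). count (mset y) x)"
      using sm K(1) by (intro sum.mono_neutral_right) auto
    also have "\<dots> = size (mset y)" by (simp add: size_multiset_overloaded_eq)
    finally show ?thesis using that by (simp add: D_def datasets_def)
  qed
  have gcomp: "g ` D \<subseteq> compositions k n"
  proof
    fix c assume "c \<in> g ` D"
    then obtain y where y: "y \<in> D" "c = g y" by blast
    have "(\<Sum>i<k. c i) = n" using sumhist[OF y(1)] y(2) by (simp add: g_def)
    moreover have "c i \<le> n" if "i < k" for i
    proof -
      have "c i \<le> (\<Sum>i<k. c i)" using that by (intro member_le_sum) auto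
      then show ?thesis using \<open>(\<Sum>i<k. c i) = n\<close> by simp
    qed
    ultimately show "c \<in> compositions k n" using y(2)
      by (auto simp: compositions_def g_def)
  qed
  have countM: "count (M c) (\<phi> j) = c j" if "j < k" for c j
  proof -
    have "count (M c) (\<phi> j) = (\<Sum>i<k. if \<phi> j = \<phi> i then c i else 0)"
      by (simp add: M_def count_sum)
    also have "\<dots> = (\<Sum>i<k. if i = j then c i else 0)"
      using phiinj that by (intro sum.cong) auto
    finally show ?thesis using that by simp
  qed
  have setM: "set_mset (M c) \<subseteq> K" for c
    by (auto simp: M_def phiK set_mset_sum split: if_splits)
  have sizeM: "c \<in> compositions k n \<Longrightarrow> size (M c) = n" for c
    by (simp add: M_def size_multiset_sum compositions_def)
  have fibre: "{y \<in> D. g y = c} = permutations_of_multiset (M c)" if c: "c \<in> compositions k n" for c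
  proof (intro set_eqI iffI)
    fix y assume "y \<in> {y \<in> D. g y = c}"
    then have y: "y \<in> D" "g y = c" by auto
    have "mset y = M c"
    proof (rule multiset_eqI)
      fix x show "count (mset y) x = count (M c) x"
      proof (cases "x \<in> K")
        case True
        then obtain j where j: "j < k" "x = \<phi> j" using phiim by auto
        have "count (mset y) x = g y j" using j by (simp add: g_def hist_mset)
        then show ?thesis using j y countM by simp
      next
        case False
        then have "x \<notin> set y" using y by (auto simp: D_def datasets_def)
        moreover have "x \<notin># M c" using setM False by auto
        ultimately show ?thesis by (simp add: count_mset_0_iff not_in_iff)
      qed
    qed
    then show "y \<in> permutations_of_multiset (M c)" by (simp add: permutations_of_multiset_def)
  next
    fix y assume "y \<in> permutations_of_multiset (M c)"
    then have my: "mset y = M c" by (simp add: permutations_of_multiset_def)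
    have "length y = n" using sizeM[OF c] my by (metis size_mset)
    moreover have "set y \<subseteq> K" using setM my by (metis set_mset_mset)
    ultimately have yD: "y \<in> D" by (simp add: D_def datasets_def)
    have "g y = c"
    proof
      fix i show "g y i = c i"
      proof (cases "i < k")
        case True then show ?thesis using countM my by (simp add: g_def hist_mset)
      next
        case False then show ?thesis using c by (auto simp: g_def compositions_def PiE_def extensional_def)
      qed
    qed
    then show "y \<in> {y \<in> D. g y = c}" using yD by simp
  qed
  have cardfib: "real (card {y \<in> D. g y = c}) = multinomial k n c" if c: "c \<in> compositions k n" for c
  proof -
    have "(\<Prod>x\<in>set_mset (M c). fact (count (M c) x)) = (\<Prod>x\<in>K. fact (count (M c) x) :: nat)"
      using setM K(1) by (intro prod.mono_neutral_left) (auto simp: not_in_iff)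
    also have "\<dots> = (\<Prod>i<k. fact (count (M c) (\<phi> i)))"
      by (rule prod.reindex_bij_betw[OF phi, symmetric])
    also have "\<dots> = (\<Prod>i<k. fact (c i))" using countM by simp
    finally have P: "(\<Prod>x\<in>set_mset (M c). fact (count (M c) x)) = (\<Prod>i<k. fact (c i) :: nat)" .
    have "card (permutations_of_multiset (M c)) * (\<Prod>i<k. fact (c i)) = fact n"
      using card_permutations_of_multiset_aux[of "M c"] P sizeM[OF c] by simp
    then have "real (card (permutations_of_multiset (M c)) * (\<Prod>i<k. fact (c i))) = real (fact n)"
      by (rule arg_cong)
    then have "real (card (permutations_of_multiset (M c))) * (\<Prod>i<k. fact (c i)) = fact n"
      by (simp only: of_nat_mult of_nat_prod of_nat_fact)
    moreover have "(\<Prod>i<k. fact (c i) :: real) \<noteq> 0" by simp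
    ultimately show ?thesis using fibre[OF c]
      by (simp add: multinomial_def field_simps)
  qed
  have imgs: "hist y ` K = c ` {..<k}" if "y \<in> D" "g y = c" for y c
  proof -
    have "hist y ` K = (\<lambda>i. hist y (\<phi> i)) ` {..<k}" using phiim by auto
    also have "\<dots> = c ` {..<k}" using that by (intro image_cong) (auto simp: g_def)
    finally show ?thesis .
  qed
  have "(\<Sum>y\<in>D. F (Max (hist y ` K)))
      = (\<Sum>c\<in>compositions k n. \<Sum>y\<in>{y \<in> D. g y = c}. F (Max (hist y ` K)))"
    using sum.group[OF fD fComp gcomp, of "\<lambda>y. F (Max (hist y ` K))"] by (rule sym)
  also have "\<dots> = (\<Sum>c\<in>compositions k n. \<Sum>y\<in>{y \<in> D. g y = c}. F (Max (c ` {..<k})))"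
    using imgs by (intro sum.cong) auto
  also have "\<dots> = (\<Sum>c\<in>compositions k n. multinomial k n c * F (Max (c ` {..<k})))"
    using cardfib by (intro sum.cong) auto
  finally show ?thesis by (simp add: D_def)
qed


theorem mainTheorem14:
  fixes K :: "'a set" and n k :: nat and \<epsilon> p :: real
  assumes "n \<ge> 1" and "k \<ge> 2" and "finite K" and "card K = k" and "\<epsilon> \<ge> 0"
    and "p = exp \<epsilon> / (real k - 1 + exp \<epsilon>)"
  shows "postV_T K n (unif_prior k n) (chanNS K k p n)
       = 1 / real k ^ n *
         (\<Sum>c\<in>compositions k n.
            multinomial k n c *
            ((p * real (Max (c ` {..<k})) + (1 - p) / (real k - 1) * (real n - real (Max (c ` {..<k}))))
             / real n))"
proof -
  define c where "c = (1 - p) / (real k - 1)"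
  define G where "G m = 1 / real k ^ n * ((p * real m + c * (real n - real m)) / real n)" for m :: nat
  have k1: "real k - 1 > 0" using assms(2) by simp
  have e1: "exp \<epsilon> \<ge> 1" using assms(5) by simp
  have den: "real k - 1 + exp \<epsilon> > 0" using k1 by (smt (verit) exp_gt_zero)
  have "1 - p = (real k - 1) / (real k - 1 + exp \<epsilon>)" using den assms(6) by (simp add: field_simps)
  then have "c = 1 / (real k - 1 + exp \<epsilon>)" using k1 by (simp add: c_def)
  then have pc: "p \<ge> c" using assms(6) den e1 by (simp add: divide_right_mono)
  have Gform: "G m = 1 / real k ^ n / real n * (c * real n + (p - c) * real m)" for m
  proof -
    have "real n > 0" "real k ^ n > 0" using assms(1,2) by auto
    then show ?thesis by (simp add: G_def field_simps)
  qed
  have monoG: "mono G"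
  proof
    fix a b :: nat assume "a \<le> b"
    then have "(p - c) * real a \<le> (p - c) * real b" using pc by (intro mult_left_mono) auto
    moreover have "1 / real k ^ n / real n \<ge> 0" by simp
    ultimately show "G a \<le> G b" unfolding Gform by (intro mult_left_mono) auto
  qed
  have Kne: "K \<noteq> {}" using assms(2-4) by auto
  have step: "Max ((\<lambda>w. \<Sum>x\<in>datasets K n. unif_prior k n x * chanNS K k p n x y * gainT w x) ` K)
      = G (Max (hist y ` K))" if y: "y \<in> datasets K n" for y
  proof -
    have "(\<lambda>w. \<Sum>x\<in>datasets K n. unif_prior k n x * chanNS K k p n x y * gainT w x) ` K
        = G ` (hist y ` K)"
      unfolding image_image
      by (intro image_cong refl) (simp add: inner_val[OF assms(3,4,2,1) y] G_def c_def)
    then show ?thesis using mono_Max_commute[OF monoG, of "hist y ` K"] assms(3) Kne by simp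
  qed
  have "postV_T K n (unif_prior k n) (chanNS K k p n) = (\<Sum>y\<in>datasets K n. G (Max (hist y ` K)))"
    unfolding postV_T_def using step by (intro sum.cong) auto
  also have "\<dots> = (\<Sum>c\<in>compositions k n. multinomial k n c * G (Max (c ` {..<k})))"
    by (rule regroup[OF assms(3,4)])
  also have "\<dots> = 1 / real k ^ n *
         (\<Sum>c\<in>compositions k n.
            multinomial k n c *
            ((p * real (Max (c ` {..<k})) + (1 - p) / (real k - 1) * (real n - real (Max (c ` {..<k}))))
             / real n))"
    by (simp add: sum_distrib_left G_def c_def mult_ac)
  finally show ?thesis .
qed

end
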